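(* Let $\mathcal{C}\subseteq\mathbb{F}_q^n$ be an MDS code with $|\mathcal{C}|=q^k$, $k\ge1$, and minimum distance $d=n-k+1$, and let $u,v\in\mathcal{C}$ with $u\ne v$. Then there exists $u'\in\mathcal{C}$ such that $d(u,u')=d$ and $d(u',v)\le d(u,v)-1$.
   Context: $d(\cdot,\cdot)$ is Hamming distance. An $(n,M,d)_q$ code is MDS if $M=q^{n-d+1}$ (it meets the Singleton bound). *)

theory Defs
  imports Main "HOL-Library.Cardinality"
begin

definition hamming :: "'a list \<Rightarrow> 'a list \<Rightarrow> nat" where
  "hamming u v = card {i. i < length u \<and> u ! i \<noteq> v ! i}"

definition min_dist :: "'a list set \<Rightarrow> nat" where
  "min_dist C = Min {hamming u v | u v. u \<in> C \<and> v \<in> C \<and> u \<noteq> v}"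

end

theory Submission
  imports Defs "HOL-Library.FuncSet"
begin

lemma hamming_agree_le:
  assumes "length x = n" "P \<subseteq> {..<n}" "\<forall>i\<in>P. x!i = y!i"
  shows "hamming x y \<le> n - card P"
proof -
  have "{i. i < length x \<and> x ! i \<noteq> y ! i} \<subseteq> {..<n} - P" using assms by auto
  hence "hamming x y \<le> card ({..<n} - P)" unfolding hamming_def by (intro card_mono) auto
  also have "\<dots> = n - card P" using assms(2) by (simp add: card_Diff_subset finite_subset)
  finally show ?thesis .
qed

lemma subset_between:
  assumes "finite B" "A \<subseteq> B" "card A \<le> m" "m \<le> card B"
  shows "\<exists>T. A \<subseteq> T \<and> T \<subseteq> B \<and> card T = m"
proof -
  have "m - card A \<le> card (B - A)" using assms by (simp add: card_Diff_subset finite_subset)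
  then obtain U where U: "U \<subseteq> B - A" "card U = m - card A" "finite U"
    using obtain_subset_with_card_n by metis
  have fa: "finite A" using assms finite_subset by blast
  have "card (A \<union> U) = card A + card U" using U fa by (intro card_Un_disjoint) auto
  thus ?thesis using U assms by (intro exI[of _ "A \<union> U"]) auto
qed

theorem lemma6:
  fixes C :: "'a::{finite,field} list set" and n k d :: nat and u v :: "'a list"
  assumes "C \<subseteq> {x. length x = n}"
    and "card C = CARD('a) ^ k"
    and "k \<ge> 1"
    and "d = min_dist C"
    and "d = n - k + 1"
    and "u \<in> C" and "v \<in> C" and "u \<noteq> v"
  shows "\<exists>u'\<in>C. hamming u u' = d \<and> hamming u' v \<le> hamming u v - 1"
proof -
  let ?q = "CARD('a)"
  have q2: "?q \<ge> 2"
  proof -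
    have "card {0::'a, 1} \<le> ?q" by (intro card_mono) auto
    thus ?thesis by simp
  qed
  have finC: "finite C" using assms(2) q2 by (intro card_ge_0_finite) simp
  have "card C \<le> card {xs::'a list. set xs \<subseteq> UNIV \<and> length xs = n}"
    using assms(1) by (intro card_mono) (use finite_lists_length_eq[of "UNIV::'a set" n] in auto)
  hence "?q ^ k \<le> ?q ^ n" using assms(2) card_lists_length_eq[of "UNIV::'a set" n] by simp
  hence kn: "k \<le> n" using q2 by (simp add: power_increasing_iff)
  have dmin: "hamming x y \<ge> d" if "x \<in> C" "y \<in> C" "x \<noteq> y" for x y
  proof -
    let ?D = "{hamming u v | u v. u \<in> C \<and> v \<in> C \<and> u \<noteq> v}"
    have "?D \<subseteq> (\<lambda>p. hamming (fst p) (snd p)) ` (C \<times> C)"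
      by (auto simp: image_iff) blast
    hence fD: "finite ?D" using finC by (meson finite_SigmaI finite_imageI finite_subset)
    have mem: "hamming x y \<in> ?D" using that by blast
    show ?thesis unfolding assms(4) min_dist_def using Min_le[OF fD mem] .
  qed
  have inj: "x = y" if "x \<in> C" "y \<in> C" "P \<subseteq> {..<n}" "card P = k" "\<forall>i\<in>P. x!i = y!i" for x y P
  proof (rule ccontr)
    assume "x \<noteq> y"
    hence "hamming x y \<ge> d" using dmin that by auto
    moreover have "hamming x y \<le> n - k" using hamming_agree_le[of x n P y] that assms(1) by auto
    ultimately show False using assms(5) kn by simp
  qed
  have ex: "\<exists>x\<in>C. \<forall>i\<in>P. x!i = f i" if P: "P \<subseteq> {..<n}" "card P = k" for P f
  proof -
    let ?r = "\<lambda>x::'a list. restrict (\<lambda>i. x!i) P"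
    have fP: "finite P" using P finite_subset by blast
    have "inj_on ?r C"
    proof
      fix x y assume "x \<in> C" "y \<in> C"
      assume xy: "?r x = ?r y"
      have "\<forall>i\<in>P. x!i = y!i"
      proof
        fix i assume "i \<in> P"
        moreover have "?r x i = ?r y i" using xy by simp
        ultimately show "x!i = y!i" by simp
      qed
      thus "x = y" using inj[of x y P] P \<open>x \<in> C\<close> \<open>y \<in> C\<close> by blast
    qed
    hence c1: "card (?r ` C) = ?q ^ k" using assms(2) card_image by metis
    have sub: "?r ` C \<subseteq> PiE P (\<lambda>_. UNIV)" by (auto simp: PiE_iff)
    have c2: "card (PiE P (\<lambda>_. (UNIV::'a set))) = ?q ^ k" using fP P by (simp add: card_PiE)
    have fin2: "finite (PiE P (\<lambda>_. (UNIV::'a set)))" using fP by (simp add: finite_PiE)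
    have eq: "?r ` C = PiE P (\<lambda>_. UNIV)" using card_subset_eq[OF fin2 sub] c1 c2 by simp
    have "restrict f P \<in> PiE P (\<lambda>_. UNIV)" by (simp add: PiE_iff)
    hence "restrict f P \<in> ?r ` C" using eq by simp
    then obtain x where x0: "x \<in> C" "restrict f P = ?r x" by (rule imageE)
    hence x: "x \<in> C" "?r x = restrict f P" by auto
    have "\<forall>i\<in>P. x!i = f i"
    proof
      fix i assume "i \<in> P"
      moreover have "?r x i = restrict f P i" using x(2) by simp
      ultimately show "x!i = f i" by simp
    qed
    thus ?thesis using x(1) by blast
  qed
  define S where "S = {i. i < n \<and> u!i \<noteq> v!i}"
  have lu: "length u = n" "length v = n" using assms(1,6,7) by auto
  have hS: "hamming u v = card S" unfolding hamming_def S_def using lu by simp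
  have Dd: "card S \<ge> d" using dmin[OF assms(6,7,8)] hS by simp
  have finS: "finite S" unfolding S_def by auto
  hence "S \<noteq> {}" using Dd assms(5) by auto
  then obtain j where j: "j \<in> S" by blast
  define R where "R = {..<n} - S"
  have cR: "card R = n - card S" unfolding R_def using finS
    by (simp add: card_Diff_subset S_def subset_eq)
  have "S \<subseteq> {..<n}" unfolding S_def by auto
  have "R \<subseteq> {..<n} - {j}" using j unfolding R_def by auto
  moreover have "card R \<le> k - 1" using cR Dd assms(5) kn by linarith
  moreover have "k - 1 \<le> card ({..<n} - {j})" using j kn unfolding S_def by simp
  ultimately obtain T where T: "R \<subseteq> T" "T \<subseteq> {..<n} - {j}" "card T = k - 1"
    using subset_between[of "{..<n} - {j}" R "k-1"] by auto
  have jn: "j < n" using j S_def by auto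
  have finT: "finite T" using T(2) finite_subset by blast
  have "j \<notin> T" using T(2) by blast
  hence cP: "card (insert j T) = k" using T finT assms(3) by simp
  obtain u' where u': "u' \<in> C" "\<forall>i\<in>insert j T. u'!i = (if i = j then v!j else u!i)"
    using ex[of "insert j T" "\<lambda>i. if i = j then v!j else u!i"] cP T jn by auto
  have "u' \<noteq> u" using u' j S_def by auto
  hence h1: "hamming u u' \<ge> d" using dmin[OF assms(6) u'(1)] by (simp add: eq_commute)
  have "hamming u u' \<le> n - card T"
  proof -
    have a1: "T \<subseteq> {..<n}" using T(2) by blast
    have a2: "\<forall>i\<in>T. u!i = u'!i"
    proof
      fix i assume i: "i \<in> T"
      hence "i \<noteq> j" using T(2) by blast
      thus "u!i = u'!i" using u'(2) i by auto
    qed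
    show ?thesis using hamming_agree_le[OF lu(1) a1 a2] .
  qed
  hence h2: "hamming u u' = d" using h1 T assms(5) kn assms(3) by linarith
  have "{i. i < length u' \<and> u' ! i \<noteq> v ! i} \<subseteq> S - {j}"
  proof
    fix i assume i: "i \<in> {i. i < length u' \<and> u' ! i \<noteq> v ! i}"
    have lu': "length u' = n" using u' assms(1) by auto
    show "i \<in> S - {j}"
    proof (cases "i \<in> S")
      case True thus ?thesis using i u' by auto
    next
      case False
      hence "i \<in> T" using T(1) i lu' R_def by auto
      hence ij: "i \<noteq> j" using T(2) by blast
      have "u'!i = u!i" using u'(2) \<open>i \<in> T\<close> ij by auto
      moreover have "u!i = v!i" using False i lu' unfolding S_def by auto
      ultimately show ?thesis using i by simp
    qed
  qed
  hence "hamming u' v \<le> card (S - {j})" unfolding hamming_def using finS by (intro card_mono) auto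
  hence "hamming u' v \<le> hamming u v - 1" using hS j finS by simp
  thus ?thesis using h2 u' by blast
qed

end
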